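(* Let $\omega_0$ and $\omega_1$ be two symplectic (nondegenerate, antisymmetric) bilinear forms on $\mathbb{R}^4$ and let $\Sigma\subset\mathbb{R}^4$ be a $3$-dimensional linear subspace such that: (i) if $v,w\in\Sigma$ and $\omega_0(v,w)$ or $\omega_1(v,w)$ is positive, then $\omega_0(v,w)$ and $\omega_1(v,w)$ are both nonnegative; (ii) if $v\in\ker(\omega_0|_{\Sigma})\cap\ker(\omega_1|_{\Sigma})$ and $\omega_0(v,w)>0$, then $\omega_1(v,w)\ge 0$. Then for all $0\le t\le 1$, the form $t\omega_0+(1-t)\omega_1$ is symplectic. *)

theory Defs
  imports "HOL-Analysis.Analysis"
begin

definition symplectic_form :: "('a::real_vector \<Rightarrow> 'a \<Rightarrow> real) \<Rightarrow> bool" where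
  "symplectic_form \<omega> \<longleftrightarrow>
     bilinear \<omega> \<and> (\<forall>v w. \<omega> v w = - \<omega> w v) \<and> (\<forall>v. (\<forall>w. \<omega> v w = 0) \<longrightarrow> v = 0)"

definition restr_kernel :: "('a \<Rightarrow> 'a \<Rightarrow> real) \<Rightarrow> 'a set \<Rightarrow> 'a set" where
  "restr_kernel \<omega> S = {v \<in> S. \<forall>w\<in>S. \<omega> v w = 0}"

end

theory Submission
  imports Defs
begin

lemma span3:
  fixes b1 b2 b3 :: "'a::real_vector"
  assumes "w \<in> span {b1,b2,b3}" "b1 \<noteq> b2" "b2 \<noteq> b3" "b1 \<noteq> b3"
  shows "\<exists>c1 c2 c3. w = c1 *\<^sub>R b1 + c2 *\<^sub>R b2 + c3 *\<^sub>R b3"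
proof -
  obtain u where "w = (\<Sum>v\<in>{b1,b2,b3}. u v *\<^sub>R v)"
    using assms(1) span_finite[of "{b1,b2,b3}"] by auto
  then have "w = u b1 *\<^sub>R b1 + u b2 *\<^sub>R b2 + u b3 *\<^sub>R b3"
    using assms(2-4) by (simp add: add.assoc)
  then show ?thesis by blast
qed

lemma odd_kernel:
  fixes \<omega> :: "real^4 \<Rightarrow> real^4 \<Rightarrow> real"
  assumes bl: "bilinear \<omega>" and as: "\<And>v w. \<omega> v w = - \<omega> w v"
    and "subspace S" and "dim S = 3"
  shows "\<exists>k\<in>S. k \<noteq> 0 \<and> (\<forall>w\<in>S. \<omega> k w = 0)"
proof -
  obtain B where B: "B \<subseteq> S" "independent B" "S \<subseteq> span B" "card B = 3"
    using basis_exists[of S] assms(4) by auto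
  then obtain b1 b2 b3 where b: "B = {b1,b2,b3}" "b1 \<noteq> b2" "b2 \<noteq> b3" "b1 \<noteq> b3"
    using card_3_iff by metis
  have diag: "\<omega> x x = 0" for x using as[of x x] by simp
  define m12 where "m12 = \<omega> b1 b2"
  define m13 where "m13 = \<omega> b1 b3"
  define m23 where "m23 = \<omega> b2 b3"
  have exp: "\<omega> k (c1 *\<^sub>R b1 + c2 *\<^sub>R b2 + c3 *\<^sub>R b3) = c1 * \<omega> k b1 + c2 * \<omega> k b2 + c3 * \<omega> k b3"
    for k c1 c2 c3
    by (simp add: bilinear_radd[OF bl] bilinear_rmul[OF bl])
  have expl: "\<omega> (c1 *\<^sub>R b1 + c2 *\<^sub>R b2 + c3 *\<^sub>R b3) w = c1 * \<omega> b1 w + c2 * \<omega> b2 w + c3 * \<omega> b3 w"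
    for w c1 c2 c3
    by (simp add: bilinear_ladd[OF bl] bilinear_lmul[OF bl])
  have inS: "b1 \<in> S" "b2 \<in> S" "b3 \<in> S" using B b by auto
  have repr: "\<And>w. w \<in> S \<Longrightarrow> \<exists>c1 c2 c3. w = c1 *\<^sub>R b1 + c2 *\<^sub>R b2 + c3 *\<^sub>R b3"
  proof -
    fix w assume "w \<in> S"
    then have "w \<in> span {b1,b2,b3}" using B(3) b(1) by blast
    then show "\<exists>c1 c2 c3. w = c1 *\<^sub>R b1 + c2 *\<^sub>R b2 + c3 *\<^sub>R b3"
      by (rule span3) (use b in auto)
  qed
  show ?thesis
  proof (cases "m12 = 0 \<and> m13 = 0 \<and> m23 = 0")
    case True
    have "b1 \<noteq> 0" using B b by (metis dependent_zero insertI1)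
    moreover have "\<forall>w\<in>S. \<omega> b1 w = 0"
    proof
      fix w assume "w \<in> S"
      then obtain c1 c2 c3 where "w = c1 *\<^sub>R b1 + c2 *\<^sub>R b2 + c3 *\<^sub>R b3" using repr by blast
      then show "\<omega> b1 w = 0" using True exp diag by (simp add: m12_def m13_def)
    qed
    ultimately show ?thesis using inS by blast
  next
    case False
    define k where "k = m23 *\<^sub>R b1 + (- m13) *\<^sub>R b2 + m12 *\<^sub>R b3"
    have "k \<in> S" unfolding k_def
      by (intro subspace_add[OF assms(3)] subspace_mul[OF assms(3)] inS)
    moreover have "k \<noteq> 0"
    proof
      assume k0: "k = 0"
      let ?u = "\<lambda>x. if x = b1 then m23 else if x = b2 then - m13 else m12"
      have sumeq: "(\<Sum>v\<in>B. ?u v *\<^sub>R v) = k" using b unfolding k_def by (simp add: add.assoc)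
      have nz: "\<exists>v\<in>B. ?u v \<noteq> 0" using False b by auto
      have fin: "finite B" using b(1) by simp
      have "dependent B" unfolding dependent_finite[OF fin]
        by (rule exI[of _ ?u], rule conjI[OF nz], simp only: sumeq k0)
      then show False using B by blast
    qed
    moreover have "\<forall>w\<in>S. \<omega> k w = 0"
    proof
      fix w assume "w \<in> S"
      then obtain c1 c2 c3 where w: "w = c1 *\<^sub>R b1 + c2 *\<^sub>R b2 + c3 *\<^sub>R b3" using repr by blast
      have a: "\<omega> k b1 = 0" "\<omega> k b2 = 0" "\<omega> k b3 = 0"
        unfolding k_def expl using diag as[of b2 b1] as[of b3 b1] as[of b3 b2]
        by (simp_all add: m12_def m13_def m23_def algebra_simps)
      show "\<omega> k w = 0" unfolding w exp a by simp
    qed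
    ultimately show ?thesis by blast
  qed
qed

lemma complement:
  fixes v :: "real^4"
  assumes "subspace S" "dim S = 3" "v \<notin> S"
  shows "\<exists>s \<sigma>. \<sigma> \<in> S \<and> w = s *\<^sub>R v + \<sigma>"
proof -
  have sp: "span S = S" using assms(1) by (simp add: span_eq_iff)
  have "v \<notin> span S" using sp assms(3) by metis
  then have "dim (insert v S) = 4" using assms(2) dim_insert[of v S] by simp
  then have "span (insert v S) = UNIV" using dim_eq_full[of "insert v S"] by simp
  then have "w \<in> span (insert v S)" by simp
  then obtain s where "w - s *\<^sub>R v \<in> span S" using span_insert[of v S] by blast
  then have "w - s *\<^sub>R v \<in> S" using sp by simp
  then show ?thesis by (metis add.commute diff_add_cancel)
qed


theorem lemma7:
  fixes \<omega>0 \<omega>1 :: "real^4 \<Rightarrow> real^4 \<Rightarrow> real" and \<Sigma> :: "(real^4) set" and t :: real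
  assumes "symplectic_form \<omega>0" and "symplectic_form \<omega>1"
    and "subspace \<Sigma>" and "dim \<Sigma> = 3"
    and "\<And>v w. v \<in> \<Sigma> \<Longrightarrow> w \<in> \<Sigma> \<Longrightarrow> (\<omega>0 v w > 0 \<or> \<omega>1 v w > 0) \<Longrightarrow>
                 \<omega>0 v w \<ge> 0 \<and> \<omega>1 v w \<ge> 0"
    and "\<And>v w. v \<in> restr_kernel \<omega>0 \<Sigma> \<inter> restr_kernel \<omega>1 \<Sigma> \<Longrightarrow> \<omega>0 v w > 0 \<Longrightarrow> \<omega>1 v w \<ge> 0"
    and "0 \<le> t" and "t \<le> 1"
  shows "symplectic_form (\<lambda>v w. t * \<omega>0 v w + (1 - t) * \<omega>1 v w)"
proof -
  define W where "W = (\<lambda>v w. t * \<omega>0 v w + (1 - t) * \<omega>1 v w)"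
  have b0: "bilinear \<omega>0" and as0: "\<And>v w. \<omega>0 v w = - \<omega>0 w v"
    and nd0: "\<And>v. (\<forall>w. \<omega>0 v w = 0) \<Longrightarrow> v = 0"
    using assms(1) unfolding symplectic_form_def by blast+
  have b1: "bilinear \<omega>1" and as1: "\<And>v w. \<omega>1 v w = - \<omega>1 w v"
    and nd1: "\<And>v. (\<forall>w. \<omega>1 v w = 0) \<Longrightarrow> v = 0"
    using assms(2) unfolding symplectic_form_def by blast+
  have bW: "bilinear W"
    unfolding bilinear_def linear_iff W_def
    by (simp add: bilinear_ladd[OF b0] bilinear_radd[OF b0] bilinear_lmul[OF b0] bilinear_rmul[OF b0]
        bilinear_ladd[OF b1] bilinear_radd[OF b1] bilinear_lmul[OF b1] bilinear_rmul[OF b1] algebra_simps)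
  have asW: "W v w = - W w v" for v w
  proof -
    have "\<omega>0 v w = - \<omega>0 w v" "\<omega>1 v w = - \<omega>1 w v" by (rule as0, rule as1)
    then show ?thesis unfolding W_def by (simp add: algebra_simps)
  qed
  have ndW: "v = 0" if h: "\<forall>w. W v w = 0" for v
  proof (cases "t = 0 \<or> t = 1")
    case True
    then show ?thesis using h nd0 nd1 unfolding W_def by auto
  next
    case False
    then have t: "0 < t" "t < 1" using assms(7,8) by auto
    show ?thesis
    proof (rule ccontr)
      assume "v \<noteq> 0"
      obtain k where k: "k \<in> \<Sigma>" "k \<noteq> 0" "\<forall>w. W k w = 0"
      proof (cases "v \<in> \<Sigma>")
        case True then show ?thesis using that h \<open>v \<noteq> 0\<close> by blast
      next
        case False
        obtain k where k: "k \<in> \<Sigma>" "k \<noteq> 0" "\<forall>w\<in>\<Sigma>. W k w = 0"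
          using odd_kernel[OF bW asW assms(3,4)] by blast
        have "W k w = 0" for w
        proof -
          obtain s \<sigma> where "\<sigma> \<in> \<Sigma>" "w = s *\<^sub>R v + \<sigma>" using complement[OF assms(3,4) False] by blast
          then have "W k w = s * W k v + W k \<sigma>"
            by (simp add: bilinear_radd[OF bW] bilinear_rmul[OF bW])
          also have "\<dots> = 0" using asW[of k v] h k \<open>\<sigma> \<in> \<Sigma>\<close> by simp
          finally show ?thesis .
        qed
        then show ?thesis using that k by blast
      qed
      have kk: "\<omega>0 k w = 0 \<and> \<omega>1 k w = 0" if "w \<in> \<Sigma>" for w
      proof -
        have e: "t * \<omega>0 k w + (1 - t) * \<omega>1 k w = 0" using k(3) unfolding W_def by metis
        have n1: "\<not> \<omega>0 k w > 0"
        proof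
          assume p: "\<omega>0 k w > 0"
          then have "\<omega>1 k w \<ge> 0" using assms(5)[OF k(1) that] by blast
          then have "(1 - t) * \<omega>1 k w \<ge> 0" using t by simp
          moreover have "t * \<omega>0 k w > 0" using p t by simp
          ultimately show False using e by linarith
        qed
        have n2: "\<not> \<omega>0 k w < 0"
        proof
          assume p: "\<omega>0 k w < 0"
          then have "\<omega>0 w k > 0" using as0[of w k] by simp
          then have "\<omega>1 w k \<ge> 0" using assms(5)[OF that k(1)] by blast
          then have "\<omega>1 k w \<le> 0" using as1[of w k] by simp
          then have "(1 - t) * \<omega>1 k w \<le> 0" using t by (simp add: mult_nonneg_nonpos)
          moreover have "t * \<omega>0 k w < 0" using p t by (simp add: mult_pos_neg)
          ultimately show False using e by linarith
        qed
        have "\<omega>0 k w = 0" using n1 n2 by simp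
        then show ?thesis using e t by simp
      qed
      then have kr: "k \<in> restr_kernel \<omega>0 \<Sigma> \<inter> restr_kernel \<omega>1 \<Sigma>"
        unfolding restr_kernel_def using k(1) by auto
      obtain w where w: "\<omega>0 k w \<noteq> 0" using nd0 k(2) by blast
      obtain w' where w': "\<omega>0 k w' > 0"
      proof (cases "\<omega>0 k w > 0")
        case True then show ?thesis using that by blast
      next
        case False
        then have "\<omega>0 k (- w) > 0" using w by (simp add: bilinear_rneg[OF b0])
        then show ?thesis using that by blast
      qed
      have "\<omega>1 k w' \<ge> 0" using assms(6)[OF kr w'] .
      moreover have "t * \<omega>0 k w' + (1 - t) * \<omega>1 k w' = 0" using k(3) unfolding W_def by metis
      moreover have "t * \<omega>0 k w' > 0" using w' t by simp
      moreover have "(1 - t) * \<omega>1 k w' \<ge> 0" using t calculation(1) by simp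
      ultimately show False by linarith
    qed
  qed
  show ?thesis unfolding symplectic_form_def W_def[symmetric] using bW asW ndW by blast
qed

end
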